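(* Let $X$ be a well-filtered space whose Smyth power space $P_S(X)$ is first-countable. The following are equivalent: (1) $X$ is locally compact. (2) $\mathsf{K}(X)$ is a continuous semilattice, and $\xi_X^\sigma:X\to\Sigma\,\mathsf{K}(X)$, $x\mapsto\uparrow x$, is continuous. (3) $\mathsf{K}(X)$ is a continuous semilattice, and $X$ has property Q. (4) $\mathsf{K}(X)$ is a continuous semilattice. (5) $X$ is core compact.
   Context: Spaces are $T_0$; specialization order $x\le y$ iff $x\in\overline{\{y\}}$; saturated = upper set. $\mathsf{K}(X)$ = nonempty compact saturated subsets ordered by reverse inclusion (a family has a supremum iff its intersection lies in $\mathsf{K}(X)$, and then it is the intersection). Scott topology on a poset: upper sets $U$ such that every directed $D$ with existing supremum in $U$ meets $U$; $\Sigma Q$ is $Q$ with it. $a\ll b$ means for every directed $D$ with existing $\bigvee D\ge b$ some $d\in D$ has $d\ge a$; $\mathsf{K}(X)$ is a continuous semilattice if it is directed complete and each $K$ is the directed supremum of $\{L:L\ll K\}$. $P_S(X)$: $\mathsf{K}(X)$ with base $\Box U=\{K:K\subseteq U\}$, $U$ open (upper Vietoris topology). Well-filtered: for open $U$ and $\mathcal K\subseteq\mathsf{K}(X)$ filtered under inclusion, $\bigcap\mathcal K\subseteq U$ implies some $K\in\mathcal K$ lies in $U$. Property Q: $K_1\ll K_2$ iff $K_2\subseteq\operatorname{int}K_1$. Locally compact: neighborhood bases of compact sets. Core compact: open-set lattice is continuous. *)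

theory Defs
  imports "HOL-Analysis.Analysis"
begin

definition spec_le :: "'a topology \<Rightarrow> 'a \<Rightarrow> 'a \<Rightarrow> bool" where
  "spec_le X x y \<longleftrightarrow> x \<in> X closure_of {y}"

definition saturated :: "'a topology \<Rightarrow> 'a set \<Rightarrow> bool" where
  "saturated X A \<longleftrightarrow> A \<subseteq> topspace X \<and>
     (\<forall>x\<in>A. \<forall>y\<in>topspace X. spec_le X x y \<longrightarrow> y \<in> A)"

definition upclosure :: "'a topology \<Rightarrow> 'a \<Rightarrow> 'a set" where
  "upclosure X x = {y \<in> topspace X. spec_le X x y}"

text \<open>K(X): nonempty compact saturated subsets; ordered by REVERSE inclusion.\<close>
definition KX :: "'a topology \<Rightarrow> 'a set set" where
  "KX X = {K. K \<noteq> {} \<and> compactin X K \<and> saturated X K}"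

text \<open>Directed subsets of K(X) w.r.t. reverse inclusion; filtered families under inclusion
  are the same thing.\<close>
definition K_directed :: "'a topology \<Rightarrow> 'a set set \<Rightarrow> bool" where
  "K_directed X D \<longleftrightarrow> D \<subseteq> KX X \<and> D \<noteq> {} \<and>
     (\<forall>K1\<in>D. \<forall>K2\<in>D. \<exists>K3\<in>D. K3 \<subseteq> K1 \<and> K3 \<subseteq> K2)"

definition well_filtered :: "'a topology \<Rightarrow> bool" where
  "well_filtered X \<longleftrightarrow>
     (\<forall>U \<K>. openin X U \<and> K_directed X \<K> \<and> \<Inter>\<K> \<subseteq> U \<longrightarrow> (\<exists>K\<in>\<K>. K \<subseteq> U))"

text \<open>Way-below in K(X): a family has a supremum iff its intersection lies in K(X),
  and then it is the intersection; \<open>\<Squnion>D \<ge> K2\<close> means \<open>\<Inter>D \<subseteq> K2\<close>.\<close>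
definition K_way_below :: "'a topology \<Rightarrow> 'a set \<Rightarrow> 'a set \<Rightarrow> bool" where
  "K_way_below X K1 K2 \<longleftrightarrow> K1 \<in> KX X \<and> K2 \<in> KX X \<and>
     (\<forall>D. K_directed X D \<and> \<Inter>D \<in> KX X \<and> \<Inter>D \<subseteq> K2 \<longrightarrow> (\<exists>d\<in>D. d \<subseteq> K1))"

definition K_directed_complete :: "'a topology \<Rightarrow> bool" where
  "K_directed_complete X \<longleftrightarrow> (\<forall>D. K_directed X D \<longrightarrow> \<Inter>D \<in> KX X)"

definition K_continuous_semilattice :: "'a topology \<Rightarrow> bool" where
  "K_continuous_semilattice X \<longleftrightarrow> K_directed_complete X \<and>
     (\<forall>K\<in>KX X. K_directed X {L. K_way_below X L K} \<and> \<Inter>{L. K_way_below X L K} = K)"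

definition K_scott_open :: "'a topology \<Rightarrow> 'a set set \<Rightarrow> bool" where
  "K_scott_open X \<U> \<longleftrightarrow> \<U> \<subseteq> KX X \<and>
     (\<forall>K\<in>\<U>. \<forall>L\<in>KX X. L \<subseteq> K \<longrightarrow> L \<in> \<U>) \<and>
     (\<forall>D. K_directed X D \<and> \<Inter>D \<in> KX X \<and> \<Inter>D \<in> \<U> \<longrightarrow> D \<inter> \<U> \<noteq> {})"

text \<open>The Scott opens already form a topology on K(X), so the generated topology
  has exactly them as open sets.\<close>
definition Sigma_K :: "'a topology \<Rightarrow> 'a set topology" where
  "Sigma_K X = topology_generated_by {\<U>. K_scott_open X \<U>}"

definition Box :: "'a topology \<Rightarrow> 'a set \<Rightarrow> 'a set set" where
  "Box X U = {K \<in> KX X. K \<subseteq> U}"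

definition smyth_power :: "'a topology \<Rightarrow> 'a set topology" where
  "smyth_power X = topology_generated_by {Box X U | U. openin X U}"

definition property_Q :: "'a topology \<Rightarrow> bool" where
  "property_Q X \<longleftrightarrow> (\<forall>K1\<in>KX X. \<forall>K2\<in>KX X.
      K_way_below X K1 K2 \<longleftrightarrow> K2 \<subseteq> X interior_of K1)"

definition locally_compact_nb :: "'a topology \<Rightarrow> bool" where
  "locally_compact_nb X \<longleftrightarrow> (\<forall>x\<in>topspace X. \<forall>U. openin X U \<and> x \<in> U \<longrightarrow>
      (\<exists>K. compactin X K \<and> x \<in> X interior_of K \<and> K \<subseteq> U))"

definition open_directed :: "'a topology \<Rightarrow> 'a set set \<Rightarrow> bool" where
  "open_directed X D \<longleftrightarrow> D \<noteq> {} \<and> (\<forall>V\<in>D. openin X V) \<and>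
     (\<forall>V1\<in>D. \<forall>V2\<in>D. \<exists>V3\<in>D. V1 \<subseteq> V3 \<and> V2 \<subseteq> V3)"

definition open_way_below :: "'a topology \<Rightarrow> 'a set \<Rightarrow> 'a set \<Rightarrow> bool" where
  "open_way_below X U V \<longleftrightarrow> openin X U \<and> openin X V \<and>
     (\<forall>D. open_directed X D \<and> V \<subseteq> \<Union>D \<longrightarrow> (\<exists>W\<in>D. U \<subseteq> W))"

definition core_compact :: "'a topology \<Rightarrow> bool" where
  "core_compact X \<longleftrightarrow> (\<forall>V. openin X V \<longrightarrow>
     open_directed X {U. open_way_below X U V} \<and> \<Union>{U. open_way_below X U V} = V)"

end

theory Submission
  imports Defs
begin


lemma spec_le_iff: "spec_le X x y \<longleftrightarrow> x \<in> topspace X \<and> (\<forall>T. openin X T \<and> x \<in> T \<longrightarrow> y \<in> T)"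
  unfolding spec_le_def in_closure_of by auto

lemma open_upper: "openin X U \<Longrightarrow> x \<in> U \<Longrightarrow> spec_le X x y \<Longrightarrow> y \<in> U"
  by (auto simp: spec_le_iff)

lemma spec_topspace: "spec_le X x y \<Longrightarrow> x \<in> topspace X \<and> y \<in> topspace X"
  by (auto simp: spec_le_iff)

lemma spec_refl: "x \<in> topspace X \<Longrightarrow> spec_le X x x"
  by (auto simp: spec_le_iff)

lemma spec_trans: "spec_le X x y \<Longrightarrow> spec_le X y z \<Longrightarrow> spec_le X x z"
  by (auto simp: spec_le_iff)

lemma open_saturated: "openin X U \<Longrightarrow> saturated X U"
  unfolding saturated_def using open_upper[of X U] openin_subset[of X U] by auto

lemma upclosure_KX: "x \<in> topspace X \<Longrightarrow> upclosure X x \<in> KX X"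
proof -
  assume x: "x \<in> topspace X"
  have xin: "x \<in> upclosure X x" using x spec_refl[OF x] by (simp add: upclosure_def)
  have "compactin X (upclosure X x)"
    unfolding compactin_def
  proof (intro conjI allI impI)
    show "upclosure X x \<subseteq> topspace X" by (auto simp: upclosure_def)
    fix \<U> assume h: "(\<forall>U\<in>\<U>. openin X U) \<and> upclosure X x \<subseteq> \<Union>\<U>"
    then obtain C where C: "C \<in> \<U>" "x \<in> C" using xin by blast
    have Co: "openin X C" using h C by blast
    have "upclosure X x \<subseteq> \<Union>{C}"
    proof
      fix y assume "y \<in> upclosure X x"
      then have "spec_le X x y" by (simp add: upclosure_def)
      then show "y \<in> \<Union>{C}" using open_upper[OF Co C(2)] by simp
    qed
    then show "\<exists>\<F>. finite \<F> \<and> \<F> \<subseteq> \<U> \<and> upclosure X x \<subseteq> \<Union>\<F>"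
      using C(1) by (intro exI[of _ "{C}"]) simp
  qed
  moreover have "upclosure X x \<noteq> {}" using xin by blast
  moreover have "saturated X (upclosure X x)"
    unfolding saturated_def
  proof (intro conjI ballI impI)
    show "upclosure X x \<subseteq> topspace X" by (auto simp: upclosure_def)
    fix y z assume "y \<in> upclosure X x" "z \<in> topspace X" "spec_le X y z"
    then show "z \<in> upclosure X x" using spec_trans[of X x y z] by (simp add: upclosure_def)
  qed
  ultimately show ?thesis by (simp add: KX_def)
qed

lemma x_in_upclosure: "x \<in> topspace X \<Longrightarrow> x \<in> upclosure X x"
  using spec_refl by (auto simp: upclosure_def)

lemma upclosure_sub: "openin X W \<Longrightarrow> y \<in> W \<Longrightarrow> upclosure X y \<subseteq> W"
  using open_upper by (auto simp: upclosure_def)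

lemma saturated_upclosure_sub: "saturated X L \<Longrightarrow> y \<in> L \<Longrightarrow> upclosure X y \<subseteq> L"
  by (auto simp: saturated_def upclosure_def)

lemma sat_sep:
  assumes "saturated X K" "y \<in> topspace X" "y \<notin> K"
  shows "\<exists>U. openin X U \<and> K \<subseteq> U \<and> y \<notin> U"
proof (intro exI conjI)
  show "openin X (topspace X - X closure_of {y})" by (rule openin_diff[OF openin_topspace closedin_closure_of])
  show "K \<subseteq> topspace X - X closure_of {y}"
  proof
    fix x assume x: "x \<in> K"
    have xt: "x \<in> topspace X" using assms(1) x by (auto simp: saturated_def)
    show "x \<in> topspace X - X closure_of {y}"
    proof (rule ccontr)
      assume "x \<notin> topspace X - X closure_of {y}"
      then have "spec_le X x y" using xt by (simp add: spec_le_def)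
      then have "y \<in> K" using assms(1,2) x unfolding saturated_def by blast
      then show False using assms(3) by simp
    qed
  qed
  show "y \<notin> topspace X - X closure_of {y}"
    using closure_of_subset[of "{y}" X] assms(2) by simp
qed

lemma KX_sub: "K \<in> KX X \<Longrightarrow> K \<subseteq> topspace X"
  by (auto simp: KX_def compactin_def)

lemma K_dir_complete:
  assumes wf: "well_filtered X" and D: "K_directed X D"
  shows "\<Inter>D \<in> KX X"
proof -
  have DK: "D \<subseteq> KX X" "D \<noteq> {}" using D by (auto simp: K_directed_def)
  have sub: "\<Inter>D \<subseteq> topspace X" using DK KX_sub by blast
  have ne: "\<Inter>D \<noteq> {}"
  proof
    assume "\<Inter>D = {}"
    then obtain K where "K \<in> D" "K \<subseteq> {}" using wf D unfolding well_filtered_def by (metis openin_empty order_refl)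
    then show False using DK by (auto simp: KX_def)
  qed
  have "compactin X (\<Inter>D)"
    unfolding compactin_def
  proof (intro conjI allI impI sub)
    fix \<U> assume h: "(\<forall>U\<in>\<U>. openin X U) \<and> \<Inter>D \<subseteq> \<Union>\<U>"
    then obtain K where K: "K \<in> D" "K \<subseteq> \<Union>\<U>" using wf D unfolding well_filtered_def
      by (metis openin_Union)
    then have "compactin X K" using DK by (auto simp: KX_def)
    then obtain \<F> where "finite \<F>" "\<F> \<subseteq> \<U>" "K \<subseteq> \<Union>\<F>" using K h unfolding compactin_def by meson
    then show "\<exists>\<F>. finite \<F> \<and> \<F> \<subseteq> \<U> \<and> \<Inter>D \<subseteq> \<Union>\<F>" using K by blast
  qed
  moreover have "saturated X (\<Inter>D)"
    using DK sub unfolding saturated_def KX_def by blast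
  ultimately show ?thesis using ne by (simp add: KX_def)
qed

lemma Q1:
  assumes wf: "well_filtered X" and K1: "K1 \<in> KX X" and K2: "K2 \<in> KX X"
    and sub: "K2 \<subseteq> X interior_of K1"
  shows "K_way_below X K1 K2"
proof -
  have "\<exists>d\<in>D. d \<subseteq> K1" if h: "K_directed X D" "\<Inter>D \<in> KX X" "\<Inter>D \<subseteq> K2" for D
  proof -
    have i: "\<Inter>D \<subseteq> X interior_of K1" using h(3) sub by simp
    have "openin X (X interior_of K1) \<and> K_directed X D \<and> \<Inter>D \<subseteq> X interior_of K1"
      using h(1) i by simp
    then obtain d where d: "d \<in> D" "d \<subseteq> X interior_of K1"
      using wf unfolding well_filtered_def by blast
    have "d \<subseteq> K1" using d(2) interior_of_subset[of X K1] by simp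
    then show ?thesis using d(1) by blast
  qed
  then show ?thesis unfolding K_way_below_def using K1 K2 by blast
qed



lemma compactin_cover:
  assumes "compactin X K" "\<forall>U\<in>\<U>. openin X U" "K \<subseteq> \<Union>\<U>"
  shows "\<exists>\<F>. finite \<F> \<and> \<F> \<subseteq> \<U> \<and> K \<subseteq> \<Union>\<F>"
proof -
  have "\<forall>\<U>. (\<forall>U \<in> \<U>. openin X U) \<and> K \<subseteq> \<Union>\<U> \<longrightarrow> (\<exists>\<F>. finite \<F> \<and> \<F> \<subseteq> \<U> \<and> K \<subseteq> \<Union>\<F>)"
    using assms(1) unfolding compactin_def by (rule conjunct2)
  then show ?thesis using assms(2,3) by simp
qed

lemma compactinI:
  assumes "K \<subseteq> topspace X"
    and "\<And>\<U>. (\<And>U. U \<in> \<U> \<Longrightarrow> openin X U) \<Longrightarrow> K \<subseteq> \<Union>\<U> \<Longrightarrow> \<exists>\<F>. finite \<F> \<and> \<F> \<subseteq> \<U> \<and> K \<subseteq> \<Union>\<F>"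
  shows "compactin X K"
  unfolding compactin_def using assms by simp

lemma KX_D: "K \<in> KX X \<Longrightarrow> K \<noteq> {} \<and> compactin X K \<and> saturated X K"
  by (simp add: KX_def)

lemma KX_I: "K \<noteq> {} \<Longrightarrow> compactin X K \<Longrightarrow> saturated X K \<Longrightarrow> K \<in> KX X"
  by (simp add: KX_def)

lemma KwbD1: "K_way_below X K1 K2 \<Longrightarrow> K1 \<in> KX X"
  by (simp add: K_way_below_def)
lemma KwbD2: "K_way_below X K1 K2 \<Longrightarrow> K2 \<in> KX X"
  by (simp add: K_way_below_def)
lemma KwbD:
  assumes "K_way_below X K1 K2" "K_directed X D" "\<Inter>D \<in> KX X" "\<Inter>D \<subseteq> K2"
  shows "\<exists>d\<in>D. d \<subseteq> K1"
proof -
  have "\<forall>D. K_directed X D \<and> \<Inter>D \<in> KX X \<and> \<Inter>D \<subseteq> K2 \<longrightarrow> (\<exists>d\<in>D. d \<subseteq> K1)"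
    using assms(1) unfolding K_way_below_def by simp
  then show ?thesis using assms(2-4) by simp
qed

lemma wfD:
  assumes "well_filtered X" "openin X U" "K_directed X \<K>" "\<Inter>\<K> \<subseteq> U"
  shows "\<exists>K\<in>\<K>. K \<subseteq> U"
proof -
  have "\<forall>U \<K>. openin X U \<and> K_directed X \<K> \<and> \<Inter>\<K> \<subseteq> U \<longrightarrow> (\<exists>K\<in>\<K>. K \<subseteq> U)"
    using assms(1) unfolding well_filtered_def by simp
  then show ?thesis using assms(2-4) by simp
qed

lemma saturatedD: "saturated X A \<Longrightarrow> x \<in> A \<Longrightarrow> y \<in> topspace X \<Longrightarrow> spec_le X x y \<Longrightarrow> y \<in> A"
  by (simp add: saturated_def)

lemma saturated_sub: "saturated X A \<Longrightarrow> A \<subseteq> topspace X"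
  by (simp add: saturated_def)

lemma saturatedI: "A \<subseteq> topspace X \<Longrightarrow> (\<And>x y. x \<in> A \<Longrightarrow> y \<in> topspace X \<Longrightarrow> spec_le X x y \<Longrightarrow> y \<in> A) \<Longrightarrow> saturated X A"
  by (simp add: saturated_def)

lemma K_directedI:
  "D \<subseteq> KX X \<Longrightarrow> D \<noteq> {} \<Longrightarrow> (\<And>K1 K2. K1 \<in> D \<Longrightarrow> K2 \<in> D \<Longrightarrow> \<exists>K3\<in>D. K3 \<subseteq> K1 \<and> K3 \<subseteq> K2) \<Longrightarrow> K_directed X D"
  by (simp add: K_directed_def)

lemma K_directed_range:
  assumes "\<And>n. D n \<in> KX X" "\<And>n. D (Suc n) \<subseteq> D n"
  shows "K_directed X (range D)"
proof (rule K_directedI)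
  show "range D \<subseteq> KX X" using assms(1) by auto
  show "range D \<noteq> {}" by simp
  fix A B assume "A \<in> range D" "B \<in> range D"
  then obtain a b where ab: "A = D a" "B = D b" by blast
  have "D (max a b) \<subseteq> D a" "D (max a b) \<subseteq> D b"
    using lift_Suc_antimono_le[of D, OF assms(2)] by simp_all
  then show "\<exists>C\<in>range D. C \<subseteq> A \<and> C \<subseteq> B" using ab by blast
qed



lemma tail_mem:
  fixes z :: "nat \<Rightarrow> 'a"
  assumes "z m \<in> topspace X" "n \<le> m"
  shows "z m \<in> K \<union> {y \<in> topspace X. \<exists>m\<ge>n. spec_le X (z m) y}"
proof -
  have "spec_le X (z m) (z m)" using assms(1) by (rule spec_refl)
  then have "\<exists>m'\<ge>n. spec_le X (z m') (z m)" using assms(2) by auto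
  then show ?thesis using assms(1) by simp
qed

lemma tail_compact:
  fixes z :: "nat \<Rightarrow> 'a"
  assumes K: "compactin X K" and zt: "\<And>m. z m \<in> topspace X"
    and ev: "\<And>G. openin X G \<Longrightarrow> K \<subseteq> G \<Longrightarrow> z n \<in> G \<Longrightarrow> \<exists>k. \<forall>m\<ge>k. z m \<in> G"
  shows "compactin X (K \<union> {y \<in> topspace X. \<exists>m\<ge>n. spec_le X (z m) y})"
    (is "compactin X ?S")
proof (rule compactinI)
  have "K \<subseteq> topspace X" using K by (rule compactin_subset_topspace)
  then show "?S \<subseteq> topspace X" by auto
next
  fix \<U> assume Uo: "\<And>U. U \<in> \<U> \<Longrightarrow> openin X U" and cov: "?S \<subseteq> \<Union>\<U>"
  have zn: "z n \<in> ?S" using tail_mem[of z n X n K] zt[of n] by simp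
  have c1: "compactin X (K \<union> {z n})" using compactin_Un[OF K, of "{z n}"] zt[of n] by simp
  have s1: "K \<subseteq> ?S" by (rule Un_upper1)
  have s2: "{z n} \<subseteq> ?S" using zn by simp
  have "K \<union> {z n} \<subseteq> ?S" using s1 s2 by (rule Un_least)
  then have cv: "K \<union> {z n} \<subseteq> \<Union>\<U>" using cov by (rule order_trans)
  have Uo2: "\<forall>U\<in>\<U>. openin X U" using Uo by simp
  obtain F1 where F1: "finite F1" "F1 \<subseteq> \<U>" "K \<union> {z n} \<subseteq> \<Union>F1"
    using compactin_cover[OF c1 Uo2 cv] by (elim exE conjE)
  have Go: "openin X (\<Union>F1)" using F1(2) Uo by (intro openin_Union) auto
  have a: "K \<subseteq> \<Union>F1" and b: "z n \<in> \<Union>F1" using F1(3) by simp_all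
  obtain k where k0: "\<forall>m\<ge>k. z m \<in> \<Union>F1" using ev[OF Go a b] by (elim exE)
  have k: "\<And>m. m \<ge> k \<Longrightarrow> z m \<in> \<Union>F1" using k0 by simp
  have "\<exists>c. c \<in> \<U> \<and> z m \<in> c" if "n \<le> m" for m
  proof -
    have "z m \<in> ?S" using tail_mem[of z m X n K, OF zt[of m] that] by simp
    then show ?thesis using cov by blast
  qed
  then obtain c where c: "\<And>m. n \<le> m \<Longrightarrow> c m \<in> \<U> \<and> z m \<in> c m" by metis
  define F where "F = F1 \<union> c ` {n..<k}"
  have "finite F" using F1(1) by (simp add: F_def finite_imageI)
  moreover have "F \<subseteq> \<U>"
  proof -
    have "c ` {n..<k} \<subseteq> \<U>" using c by auto
    then show ?thesis using F1(2) by (simp add: F_def)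
  qed
  moreover have "?S \<subseteq> \<Union>F"
  proof
    fix y assume y: "y \<in> ?S"
    show "y \<in> \<Union>F"
    proof (cases "y \<in> K")
      case True then show ?thesis using F1(3) by (auto simp: F_def)
    next
      case False
      then obtain m where m: "m \<ge> n" "spec_le X (z m) y" using y by blast
      show ?thesis
      proof (cases "m < k")
        case True
        then have "c m \<in> F" using m(1) by (simp add: F_def)
        moreover have "y \<in> c m" using open_upper[OF Uo[of "c m"]] c[OF m(1)] m(2) by blast
        ultimately show ?thesis by blast
      next
        case False
        then have "z m \<in> \<Union>F1" using k[of m] by simp
        then obtain C where C: "C \<in> F1" "z m \<in> C" by blast
        then have "y \<in> C" using open_upper[OF Uo[of C]] F1(2) m(2) by blast
        then show ?thesis using C(1) by (auto simp: F_def)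
      qed
    qed
  qed
  ultimately show "\<exists>\<F>. finite \<F> \<and> \<F> \<subseteq> \<U> \<and> ?S \<subseteq> \<Union>\<F>" by blast
qed

lemma tail_saturated:
  fixes z :: "nat \<Rightarrow> 'a"
  assumes K: "saturated X K"
  shows "saturated X (K \<union> {y \<in> topspace X. \<exists>m\<ge>n. spec_le X (z m) y})"
    (is "saturated X ?S")
proof (rule saturatedI)
  have "K \<subseteq> topspace X" using K by (rule saturated_sub)
  then show "?S \<subseteq> topspace X" by auto
next
  fix x y assume x: "x \<in> ?S" and y: "y \<in> topspace X" and xy: "spec_le X x y"
  show "y \<in> ?S"
  proof (cases "x \<in> K")
    case True
    have "y \<in> K" using K True y xy by (rule saturatedD)
    then show ?thesis by simp
  next
    case False
    then obtain m where m: "m \<ge> n" "spec_le X (z m) x" using x by auto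
    have "spec_le X (z m) y" using m(2) xy by (rule spec_trans)
    then have "\<exists>m\<ge>n. spec_le X (z m) y" using m(1) by auto
    then show ?thesis using y by simp
  qed
qed



lemma Box_Int: "Box X (A \<inter> B) = Box X A \<inter> Box X B"
  by (auto simp: Box_def)

lemma box_nbhd:
  assumes "generate_topology_on {Box X U |U. openin X U} V"
  shows "\<forall>K\<in>V. \<exists>W. openin X W \<and> K \<in> Box X W \<and> Box X W \<subseteq> V"
  using assms
proof induction
  case (Int a b)
  show ?case
  proof
    fix K assume K: "K \<in> a \<inter> b"
    obtain W1 where W1: "openin X W1" "K \<in> Box X W1" "Box X W1 \<subseteq> a" using Int.IH(1) K by auto
    obtain W2 where W2: "openin X W2" "K \<in> Box X W2" "Box X W2 \<subseteq> b" using Int.IH(2) K by auto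
    have "openin X (W1 \<inter> W2)" using W1(1) W2(1) by (rule openin_Int)
    moreover have "K \<in> Box X (W1 \<inter> W2)" "Box X (W1 \<inter> W2) \<subseteq> a \<inter> b"
      using W1 W2 by (auto simp: Box_Int)
    ultimately show "\<exists>W. openin X W \<and> K \<in> Box X W \<and> Box X W \<subseteq> a \<inter> b" by blast
  qed
next
  case (UN K)
  show ?case
  proof
    fix L assume "L \<in> \<Union>K"
    then obtain k where k: "k \<in> K" "L \<in> k" by blast
    obtain W where W: "openin X W" "L \<in> Box X W" "Box X W \<subseteq> k" using UN.IH[OF k(1)] k(2) by blast
    have "Box X W \<subseteq> \<Union>K" using W(3) k(1) by auto
    then show "\<exists>W. openin X W \<and> L \<in> Box X W \<and> Box X W \<subseteq> \<Union>K" using W by blast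
  qed
next
  case (Basis s)
  then obtain U where U: "s = Box X U" "openin X U" by blast
  show ?case
  proof
    fix L assume "L \<in> s"
    then show "\<exists>W. openin X W \<and> L \<in> Box X W \<and> Box X W \<subseteq> s" using U by (intro exI[of _ U]) simp
  qed
next
  case Empty
  show ?case by simp
qed
lemma box_sub: "openin X W \<Longrightarrow> Box X W \<subseteq> Box X U \<Longrightarrow> W \<subseteq> U"
proof
  fix y assume W: "openin X W" and B: "Box X W \<subseteq> Box X U" and y: "y \<in> W"
  have yt: "y \<in> topspace X" using W y openin_subset by blast
  have "upclosure X y \<in> Box X W" using upclosure_KX[OF yt] upclosure_sub[OF W y] by (simp add: Box_def)
  then have "upclosure X y \<subseteq> U" using B by (auto simp: Box_def)
  then show "y \<in> U" using x_in_upclosure[OF yt] by blast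
qed

lemma topspace_smyth: "topspace (smyth_power X) = KX X"
proof -
  have "\<Union>{Box X U |U. openin X U} = KX X"
  proof
    show "\<Union>{Box X U |U. openin X U} \<subseteq> KX X" by (auto simp: Box_def)
    show "KX X \<subseteq> \<Union>{Box X U |U. openin X U}"
    proof
      fix K assume "K \<in> KX X"
      then have "K \<in> Box X (topspace X)" using KX_sub by (auto simp: Box_def)
      then show "K \<in> \<Union>{Box X U |U. openin X U}" by blast
    qed
  qed
  then show ?thesis by (simp add: smyth_power_def)
qed

lemma nbhd_base:
  assumes fc: "first_countable (smyth_power X)" and K: "K \<in> KX X"
  shows "\<exists>W. (\<forall>n. openin X (W n) \<and> K \<subseteq> W n \<and> W (Suc n) \<subseteq> W n) \<and>
             (\<forall>U. openin X U \<and> K \<subseteq> U \<longrightarrow> (\<exists>n. W n \<subseteq> U))"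
proof -
  have Kt: "K \<in> topspace (smyth_power X)" using K topspace_smyth by blast
  obtain \<B> where cB: "countable \<B>" and oB: "\<forall>V\<in>\<B>. openin (smyth_power X) V"
    and bB: "\<forall>U. openin (smyth_power X) U \<and> K \<in> U \<longrightarrow> (\<exists>V\<in>\<B>. K \<in> V \<and> V \<subseteq> U)"
    using fc Kt unfolding first_countable_def by meson
  define B' where "B' = {V\<in>\<B>. K \<in> V}"
  have boxo: "openin (smyth_power X) (Box X U)" if "openin X U" for U
    unfolding smyth_power_def using that by (intro topology_generated_by_Basis) blast
  have "K \<in> Box X (topspace X)" using K KX_sub by (auto simp: Box_def)
  then have "B' \<noteq> {}" using bB boxo[OF openin_topspace] by (auto simp: B'_def)
  have cB': "countable B'" using cB by (auto simp: B'_def)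
  have "\<forall>V\<in>B'. \<exists>W. openin X W \<and> K \<in> Box X W \<and> Box X W \<subseteq> V"
  proof
    fix V assume "V \<in> B'"
    then have "generate_topology_on {Box X U |U. openin X U} V" "K \<in> V"
      using oB unfolding B'_def smyth_power_def by (auto dest: openin_topology_generated_by)
    then show "\<exists>W. openin X W \<and> K \<in> Box X W \<and> Box X W \<subseteq> V" using box_nbhd by blast
  qed
  then obtain W' where W': "\<And>V. V \<in> B' \<Longrightarrow> openin X (W' V) \<and> K \<in> Box X (W' V) \<and> Box X (W' V) \<subseteq> V"
    by metis
  define e where "e = from_nat_into B'"
  have e: "e i \<in> B'" for i using \<open>B' \<noteq> {}\<close> by (simp add: e_def from_nat_into)
  have re: "range e = B'" using \<open>B' \<noteq> {}\<close> cB' by (simp add: e_def)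
  define W where "W = rec_nat (W' (e 0)) (\<lambda>n w. w \<inter> W' (e (Suc n)))"
  have W0: "W 0 = W' (e 0)" and WS: "W (Suc n) = W n \<inter> W' (e (Suc n))" for n by (simp_all add: W_def)
  have Wsub: "W i \<subseteq> W' (e i)" for i by (cases i) (auto simp: W0 WS)
  have props: "openin X (W n) \<and> K \<subseteq> W n" for n
  proof (induction n)
    case 0 then show ?case using W'[OF e] by (auto simp: W0 Box_def)
  next
    case (Suc n) then show ?case using W'[OF e, of "Suc n"] by (auto simp: WS Box_def)
  qed
  show ?thesis
  proof (intro exI[of _ W] conjI allI impI)
    fix n show "openin X (W n)" "K \<subseteq> W n" using props by auto
    show "W (Suc n) \<subseteq> W n" by (auto simp: WS)
  next
    fix U assume U: "openin X U \<and> K \<subseteq> U"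
    then have "K \<in> Box X U" using K by (auto simp: Box_def)
    then obtain V where V: "V \<in> \<B>" "K \<in> V" "V \<subseteq> Box X U" using bB boxo U by meson
    then have "V \<in> B'" by (auto simp: B'_def)
    then obtain i where i: "V = e i" using re by blast
    have "W' (e i) \<subseteq> U" using W'[OF e, of i] V i box_sub by blast
    then show "\<exists>n. W n \<subseteq> U" using Wsub by blast
  qed
qed

lemma decseq_le: "(\<And>n. W (Suc n) \<subseteq> W n) \<Longrightarrow> n \<le> m \<Longrightarrow> W m \<subseteq> (W n :: 'b set)"
  by (rule lift_Suc_antimono_le[of W]) auto

lemma Q2:
  assumes fc: "first_countable (smyth_power X)" and wb: "K_way_below X K1 K2"
  shows "K2 \<subseteq> X interior_of K1"
proof (rule ccontr)
  assume nsub: "\<not> K2 \<subseteq> X interior_of K1"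
  have K1: "K1 \<in> KX X" using wb by (rule KwbD1)
  have K2: "K2 \<in> KX X" using wb by (rule KwbD2)
  obtain W :: "nat \<Rightarrow> 'a set" where W: "\<forall>n. openin X (W n) \<and> K2 \<subseteq> W n \<and> W (Suc n) \<subseteq> W n"
    and Wb0: "\<forall>U. openin X U \<and> K2 \<subseteq> U \<longrightarrow> (\<exists>n. W n \<subseteq> U)"
    using nbhd_base[OF fc K2] by (elim exE conjE)
  have Wo: "openin X (W n)" for n using W by simp
  have WK: "K2 \<subseteq> W n" for n using W by simp
  have Wd: "W (Suc n) \<subseteq> W n" for n using W by simp
  have Wb: "\<exists>n. W n \<subseteq> U" if "openin X U" "K2 \<subseteq> U" for U using Wb0 that by simp
  have Wle: "W m \<subseteq> W n" if "n \<le> m" for n m using lift_Suc_antimono_le[of W, OF Wd that] by simp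
  have ex: "\<exists>z. z \<in> W n \<and> z \<notin> K1" for n
  proof (rule ccontr)
    assume "\<not> ?thesis"
    then have "W n \<subseteq> K1" by auto
    then have "W n \<subseteq> X interior_of K1" using Wo[of n] by (rule interior_of_maximal)
    then show False using WK[of n] nsub by simp
  qed
  obtain z :: "nat \<Rightarrow> 'a" where z: "\<forall>n. z n \<in> W n \<and> z n \<notin> K1"
    using ex by metis
  have zW: "z n \<in> W n" and zK: "z n \<notin> K1" for n using z by simp_all
  have zt: "z n \<in> topspace X" for n using zW[of n] openin_subset[OF Wo[of n]] by auto
  define D where "D n = K2 \<union> {y \<in> topspace X. \<exists>m\<ge>n. spec_le X (z m) y}" for n
  have K2D: "K2 \<noteq> {}" "compactin X K2" "saturated X K2" using KX_D[OF K2] by simp_all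
  have ev: "\<exists>k. \<forall>m\<ge>k. z m \<in> G" if G: "openin X G" "K2 \<subseteq> G" for G
  proof -
    obtain k where k: "W k \<subseteq> G" using Wb[OF G] by (elim exE)
    have "z m \<in> G" if "m \<ge> k" for m using zW[of m] Wle[OF that] k by auto
    then show ?thesis by auto
  qed
  have DKX: "D n \<in> KX X" for n
  proof (rule KX_I)
    show "D n \<noteq> {}" using K2D(1) by (auto simp: D_def)
    show "compactin X (D n)" unfolding D_def using K2D(2) zt ev by (rule tail_compact)
    show "saturated X (D n)" unfolding D_def using K2D(3) by (rule tail_saturated)
  qed
  have Dd: "D (Suc n) \<subseteq> D n" for n
  proof
    fix y assume "y \<in> D (Suc n)"
    then have "y \<in> K2 \<or> (y \<in> topspace X \<and> (\<exists>m\<ge>Suc n. spec_le X (z m) y))" by (simp add: D_def)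
    then show "y \<in> D n"
    proof
      assume "y \<in> K2" then show ?thesis by (simp add: D_def)
    next
      assume h: "y \<in> topspace X \<and> (\<exists>m\<ge>Suc n. spec_le X (z m) y)"
      then obtain m where "m \<ge> Suc n" "spec_le X (z m) y" by auto
      then have "\<exists>m\<ge>n. spec_le X (z m) y" by (intro exI[of _ m]) simp
      then show ?thesis using h by (simp add: D_def)
    qed
  qed
  have Ddir: "K_directed X (range D)" using DKX Dd by (rule K_directed_range)
  have Dint: "\<Inter>(range D) = K2"
  proof
    show "K2 \<subseteq> \<Inter>(range D)" by (auto simp: D_def)
    show "\<Inter>(range D) \<subseteq> K2"
    proof
      fix y assume y: "y \<in> \<Inter>(range D)"
      show "y \<in> K2"
      proof (rule ccontr)
        assume yK: "y \<notin> K2"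
        have "y \<in> D 0" using y by simp
        then have yt: "y \<in> topspace X" using yK by (simp add: D_def)
        obtain G where G: "openin X G" "K2 \<subseteq> G" "y \<notin> G" using sat_sep[OF K2D(3) yt yK] by (elim exE conjE)
        obtain k where k: "W k \<subseteq> G" using Wb[OF G(1,2)] by (elim exE)
        have "y \<in> D k" using y by simp
        then obtain m where m: "m \<ge> k" "spec_le X (z m) y" using yK by (auto simp: D_def)
        have "z m \<in> G" using zW[of m] Wle[OF m(1)] k by auto
        then have "y \<in> G" using open_upper[OF G(1) _ m(2)] by simp
        then show False using G(3) by simp
      qed
    qed
  qed
  have i1: "\<Inter>(range D) \<in> KX X" and i2: "\<Inter>(range D) \<subseteq> K2" using Dint K2 by simp_all
  obtain d where d: "d \<in> range D" "d \<subseteq> K1" using KwbD[OF wb Ddir i1 i2] by (elim bexE)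
  then obtain n where "D n \<subseteq> K1" by auto
  moreover have "z n \<in> D n" unfolding D_def using tail_mem[of z n X n K2] zt[of n] by simp
  ultimately show False using zK[of n] by auto
qed

lemma propQ:
  assumes "well_filtered X" "first_countable (smyth_power X)"
  shows "property_Q X"
  unfolding property_Q_def
proof (intro ballI)
  fix K1 K2 assume "K1 \<in> KX X" "K2 \<in> KX X"
  then show "K_way_below X K1 K2 \<longleftrightarrow> K2 \<subseteq> X interior_of K1"
    using Q1[OF assms(1)] Q2[OF assms(2)] by blast
qed



lemma sat_compact:
  assumes M: "compactin X M"
  shows "compactin X {y \<in> topspace X. \<exists>x\<in>M. spec_le X x y}" (is "compactin X ?S")
proof (rule compactinI)
  show "?S \<subseteq> topspace X" by auto
next
  fix \<U> assume Uo: "\<And>U. U \<in> \<U> \<Longrightarrow> openin X U" and cov: "?S \<subseteq> \<Union>\<U>"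
  have Mt: "M \<subseteq> topspace X" using M by (rule compactin_subset_topspace)
  have "M \<subseteq> ?S"
  proof
    fix x assume x: "x \<in> M"
    then have xt: "x \<in> topspace X" using Mt by auto
    have "spec_le X x x" using xt by (rule spec_refl)
    then show "x \<in> ?S" using x xt by auto
  qed
  then have cv: "M \<subseteq> \<Union>\<U>" using cov by (rule order_trans)
  have Uo2: "\<forall>U\<in>\<U>. openin X U" using Uo by simp
  obtain F where F: "finite F" "F \<subseteq> \<U>" "M \<subseteq> \<Union>F"
    using compactin_cover[OF M Uo2 cv] by (elim exE conjE)
  have "?S \<subseteq> \<Union>F"
  proof
    fix y assume "y \<in> ?S"
    then obtain x where x: "x \<in> M" "spec_le X x y" by auto
    then obtain C where C: "C \<in> F" "x \<in> C" using F(3) by auto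
    have "openin X C" using Uo C(1) F(2) by auto
    then have "y \<in> C" using C(2) x(2) by (rule open_upper)
    then show "y \<in> \<Union>F" using C(1) by auto
  qed
  then show "\<exists>\<F>. finite \<F> \<and> \<F> \<subseteq> \<U> \<and> ?S \<subseteq> \<Union>\<F>" using F(1,2) by auto
qed

lemma sat_saturated: "saturated X {y \<in> topspace X. \<exists>x\<in>M. spec_le X x y}"
proof (rule saturatedI)
  show "{y \<in> topspace X. \<exists>x\<in>M. spec_le X x y} \<subseteq> topspace X" by auto
next
  fix a b assume a: "a \<in> {y \<in> topspace X. \<exists>x\<in>M. spec_le X x y}" and b: "b \<in> topspace X"
    and ab: "spec_le X a b"
  then obtain x where x: "x \<in> M" "spec_le X x a" by auto
  have "spec_le X x b" using x(2) ab by (rule spec_trans)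
  then show "b \<in> {y \<in> topspace X. \<exists>x\<in>M. spec_le X x y}" using x(1) b by auto
qed

lemma lcD:
  assumes "locally_compact_nb X" "x \<in> topspace X" "openin X U" "x \<in> U"
  shows "\<exists>K. compactin X K \<and> x \<in> X interior_of K \<and> K \<subseteq> U"
proof -
  have "\<forall>x\<in>topspace X. \<forall>U. openin X U \<and> x \<in> U \<longrightarrow>
      (\<exists>K. compactin X K \<and> x \<in> X interior_of K \<and> K \<subseteq> U)"
    using assms(1) unfolding locally_compact_nb_def by simp
  then show ?thesis using assms(2-4) by simp
qed

lemma LC1:
  assumes lc: "locally_compact_nb X" and K: "compactin X K" "K \<noteq> {}"
    and U: "openin X U" "K \<subseteq> U"
  shows "\<exists>L\<in>KX X. K \<subseteq> X interior_of L \<and> L \<subseteq> U"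
proof -
  have Kt: "K \<subseteq> topspace X" using K(1) by (rule compactin_subset_topspace)
  have "\<exists>C. compactin X C \<and> x \<in> X interior_of C \<and> C \<subseteq> U" if "x \<in> K" for x
    using lcD[OF lc _ U(1)] that Kt U(2) by auto
  then obtain C where C: "\<And>x. x \<in> K \<Longrightarrow> compactin X (C x) \<and> x \<in> X interior_of (C x) \<and> C x \<subseteq> U"
    by metis
  have o: "\<forall>V\<in>(\<lambda>x. X interior_of (C x)) ` K. openin X V" by auto
  have cv: "K \<subseteq> \<Union>((\<lambda>x. X interior_of (C x)) ` K)" using C by auto
  obtain \<F> where F: "finite \<F>" "\<F> \<subseteq> (\<lambda>x. X interior_of (C x)) ` K" "K \<subseteq> \<Union>\<F>"
    using compactin_cover[OF K(1) o cv] by (elim exE conjE)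
  obtain F0 where F0: "F0 \<subseteq> K" "finite F0" "\<F> = (\<lambda>x. X interior_of (C x)) ` F0"
    using finite_subset_image[OF F(1,2)] by (elim exE conjE)
  define M where "M = \<Union>(C ` F0)"
  have Mc: "compactin X M" unfolding M_def
    using F0(1,2) C by (intro compactin_Union) auto
  define L where "L = {y \<in> topspace X. \<exists>x\<in>M. spec_le X x y}"
  have Lc: "compactin X L" unfolding L_def using Mc by (rule sat_compact)
  have Ls: "saturated X L" unfolding L_def by (rule sat_saturated)
  have MsubL: "M \<subseteq> L"
  proof
    fix x assume x: "x \<in> M"
    have xt: "x \<in> topspace X" using x compactin_subset_topspace[OF Mc] by auto
    have "spec_le X x x" using xt by (rule spec_refl)
    then show "x \<in> L" using x xt by (auto simp: L_def)
  qed
  have KL: "K \<subseteq> X interior_of L"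
  proof
    fix y assume "y \<in> K"
    then obtain x where x: "x \<in> F0" "y \<in> X interior_of (C x)" using F(3) F0(3) by auto
    have "X interior_of (C x) \<subseteq> C x" by (rule interior_of_subset)
    also have "C x \<subseteq> M" using x(1) by (auto simp: M_def)
    also have "M \<subseteq> L" by (rule MsubL)
    finally have "X interior_of (C x) \<subseteq> X interior_of L"
      by (intro interior_of_maximal) simp_all
    then show "y \<in> X interior_of L" using x(2) by auto
  qed
  have LU: "L \<subseteq> U"
  proof
    fix y assume "y \<in> L"
    then obtain x where x: "x \<in> M" "spec_le X x y" by (auto simp: L_def)
    then obtain z where z: "z \<in> F0" "x \<in> C z" by (auto simp: M_def)
    have "C z \<subseteq> U" using C z(1) F0(1) by auto
    then have "x \<in> U" using z(2) by auto
    then show "y \<in> U" using U(1) x(2) open_upper by metis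
  qed
  have "L \<noteq> {}" using KL K(2) interior_of_subset[of X L] by auto
  then have "L \<in> KX X" using Lc Ls by (rule KX_I)
  then show ?thesis using KL LU by auto
qed

lemma Kcont_D:
  assumes "K_continuous_semilattice X" "K \<in> KX X"
  shows "K_directed X {L. K_way_below X L K} \<and> \<Inter>{L. K_way_below X L K} = K"
proof -
  have "\<forall>K\<in>KX X. K_directed X {L. K_way_below X L K} \<and> \<Inter>{L. K_way_below X L K} = K"
    using assms(1) unfolding K_continuous_semilattice_def by simp
  then show ?thesis using assms(2) by simp
qed

lemma K_dirD:
  assumes "K_directed X D"
  shows "D \<subseteq> KX X" "D \<noteq> {}" "\<And>K1 K2. K1 \<in> D \<Longrightarrow> K2 \<in> D \<Longrightarrow> \<exists>K3\<in>D. K3 \<subseteq> K1 \<and> K3 \<subseteq> K2"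
  using assms unfolding K_directed_def by simp_all

lemma LC_imp_Kcont:
  assumes wf: "well_filtered X" and fc: "first_countable (smyth_power X)" and lc: "locally_compact_nb X"
  shows "K_continuous_semilattice X"
  unfolding K_continuous_semilattice_def
proof (intro conjI ballI)
  show "K_directed_complete X" unfolding K_directed_complete_def
    using K_dir_complete[OF wf] by blast
next
  fix K assume K: "K \<in> KX X"
  have KD: "K \<noteq> {}" "compactin X K" "saturated X K" using KX_D[OF K] by simp_all
  have mem: "K_way_below X L K \<longleftrightarrow> L \<in> KX X \<and> K \<subseteq> X interior_of L" for L
    using Q1[OF wf _ K, of L] Q2[OF fc, of L K] KwbD1[of X L K] by blast
  have get: "\<exists>L. K_way_below X L K \<and> L \<subseteq> U" if U1: "openin X U" and U2: "K \<subseteq> U" for U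
  proof -
    obtain L where "L \<in> KX X" "K \<subseteq> X interior_of L" "L \<subseteq> U"
      using LC1[OF lc KD(2) KD(1) U1 U2] by (elim bexE conjE)
    then show ?thesis using mem by blast
  qed
  show "K_directed X {L. K_way_below X L K}"
  proof (rule K_directedI)
    show "{L. K_way_below X L K} \<subseteq> KX X" using mem by blast
    show "{L. K_way_below X L K} \<noteq> {}"
      using get[OF openin_topspace compactin_subset_topspace[OF KD(2)]] by auto
    fix L1 L2 assume L1: "L1 \<in> {L. K_way_below X L K}" and L2: "L2 \<in> {L. K_way_below X L K}"
    have i1: "K \<subseteq> X interior_of L1" and i2: "K \<subseteq> X interior_of L2" using L1 L2 mem by auto
    have o: "openin X (X interior_of L1 \<inter> X interior_of L2)" by auto
    have ii: "K \<subseteq> X interior_of L1 \<inter> X interior_of L2" using i1 i2 by auto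
    obtain L3 where L3: "K_way_below X L3 K" "L3 \<subseteq> X interior_of L1 \<inter> X interior_of L2"
      using get[OF o ii] by (elim exE conjE)
    have "L3 \<subseteq> L1" "L3 \<subseteq> L2" using L3(2) interior_of_subset[of X L1] interior_of_subset[of X L2] by auto
    then show "\<exists>K3\<in>{L. K_way_below X L K}. K3 \<subseteq> L1 \<and> K3 \<subseteq> L2" using L3(1) by auto
  qed
  show "\<Inter>{L. K_way_below X L K} = K"
  proof
    show "K \<subseteq> \<Inter>{L. K_way_below X L K}"
    proof
      fix x assume x: "x \<in> K"
      show "x \<in> \<Inter>{L. K_way_below X L K}"
      proof
        fix L assume "L \<in> {L. K_way_below X L K}"
        then have "K \<subseteq> X interior_of L" using mem by auto
        then show "x \<in> L" using x interior_of_subset[of X L] by auto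
      qed
    qed
    show "\<Inter>{L. K_way_below X L K} \<subseteq> K"
    proof
      fix y assume y: "y \<in> \<Inter>{L. K_way_below X L K}"
      obtain L0 where L0: "K_way_below X L0 K" "L0 \<subseteq> topspace X"
        using get[OF openin_topspace compactin_subset_topspace[OF KD(2)]] by auto
      have yt: "y \<in> topspace X" using y L0 by auto
      show "y \<in> K"
      proof (rule ccontr)
        assume yK: "y \<notin> K"
        obtain G where G: "openin X G" "K \<subseteq> G" "y \<notin> G" using sat_sep[OF KD(3) yt yK] by (elim exE conjE)
        obtain L where L: "K_way_below X L K" "L \<subseteq> G" using get[OF G(1,2)] by (elim exE conjE)
        have "y \<in> L" using y L(1) by auto
        then show False using L(2) G(3) by auto
      qed
    qed
  qed
qed

lemma Kcont_imp_LC: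
  assumes wf: "well_filtered X" and fc: "first_countable (smyth_power X)" and kc: "K_continuous_semilattice X"
  shows "locally_compact_nb X"
  unfolding locally_compact_nb_def
proof (intro ballI allI impI)
  fix x U assume x: "x \<in> topspace X" and U: "openin X U \<and> x \<in> U"
  have K: "upclosure X x \<in> KX X" using x by (rule upclosure_KX)
  have cd: "K_directed X {L. K_way_below X L (upclosure X x)}"
    and ci: "\<Inter>{L. K_way_below X L (upclosure X x)} = upclosure X x" using Kcont_D[OF kc K] by simp_all
  have "upclosure X x \<subseteq> U" using U upclosure_sub by metis
  then have "\<Inter>{L. K_way_below X L (upclosure X x)} \<subseteq> U" using ci by simp
  then obtain L where L: "L \<in> {L. K_way_below X L (upclosure X x)}" "L \<subseteq> U"
    using wfD[OF wf _ cd] U by blast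
  have "upclosure X x \<subseteq> X interior_of L" using Q2[OF fc] L(1) by auto
  then have "x \<in> X interior_of L" using x_in_upclosure[OF x] by auto
  moreover have "compactin X L" using KX_D[OF KwbD1[of X L "upclosure X x"]] L(1) by auto
  ultimately show "\<exists>K. compactin X K \<and> x \<in> X interior_of K \<and> K \<subseteq> U" using L(2) by auto
qed



lemma odD:
  assumes "open_directed X D"
  shows "D \<noteq> {}" "\<And>V. V \<in> D \<Longrightarrow> openin X V" "\<And>V1 V2. V1 \<in> D \<Longrightarrow> V2 \<in> D \<Longrightarrow> \<exists>V3\<in>D. V1 \<subseteq> V3 \<and> V2 \<subseteq> V3"
  using assms unfolding open_directed_def by simp_all

lemma odI:
  "D \<noteq> {} \<Longrightarrow> (\<And>V. V \<in> D \<Longrightarrow> openin X V) \<Longrightarrow> (\<And>V1 V2. V1 \<in> D \<Longrightarrow> V2 \<in> D \<Longrightarrow> \<exists>V3\<in>D. V1 \<subseteq> V3 \<and> V2 \<subseteq> V3) \<Longrightarrow> open_directed X D"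
  unfolding open_directed_def by simp

lemma owbD:
  assumes "open_way_below X U V"
  shows "openin X U" "openin X V" "\<And>D. open_directed X D \<Longrightarrow> V \<subseteq> \<Union>D \<Longrightarrow> \<exists>W\<in>D. U \<subseteq> W"
proof -
  show "openin X U" "openin X V" using assms unfolding open_way_below_def by simp_all
  have "\<forall>D. open_directed X D \<and> V \<subseteq> \<Union>D \<longrightarrow> (\<exists>W\<in>D. U \<subseteq> W)"
    using assms unfolding open_way_below_def by simp
  then show "\<And>D. open_directed X D \<Longrightarrow> V \<subseteq> \<Union>D \<Longrightarrow> \<exists>W\<in>D. U \<subseteq> W" by simp
qed

lemma owbI:
  "openin X U \<Longrightarrow> openin X V \<Longrightarrow> (\<And>D. open_directed X D \<Longrightarrow> V \<subseteq> \<Union>D \<Longrightarrow> \<exists>W\<in>D. U \<subseteq> W) \<Longrightarrow> open_way_below X U V"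
  unfolding open_way_below_def by simp

lemma owb_sub:
  assumes "open_way_below X U V" shows "U \<subseteq> V"
proof -
  have "open_directed X {V}" using owbD(2)[OF assms] by (intro odI) auto
  moreover have "V \<subseteq> \<Union>{V}" by simp
  ultimately obtain W where "W \<in> {V}" "U \<subseteq> W" using owbD(3)[OF assms] by blast
  then show ?thesis by simp
qed

lemma owb_mono:
  assumes "open_way_below X U V" "openin X U'" "U' \<subseteq> U" "openin X V'" "V \<subseteq> V'"
  shows "open_way_below X U' V'"
proof (rule owbI[OF assms(2,4)])
  fix D assume D: "open_directed X D" "V' \<subseteq> \<Union>D"
  then have "V \<subseteq> \<Union>D" using assms(5) by auto
  then obtain W where "W \<in> D" "U \<subseteq> W" using owbD(3)[OF assms(1) D(1)] by blast
  then show "\<exists>W\<in>D. U' \<subseteq> W" using assms(3) by auto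
qed

lemma owb_Un:
  assumes "open_way_below X U1 V" "open_way_below X U2 V"
  shows "open_way_below X (U1 \<union> U2) V"
proof (rule owbI)
  show "openin X (U1 \<union> U2)" using owbD(1)[OF assms(1)] owbD(1)[OF assms(2)] by auto
  show "openin X V" using owbD(2)[OF assms(1)] .
  fix D assume D: "open_directed X D" "V \<subseteq> \<Union>D"
  obtain W1 where W1: "W1 \<in> D" "U1 \<subseteq> W1" using owbD(3)[OF assms(1) D] by (elim bexE)
  obtain W2 where W2: "W2 \<in> D" "U2 \<subseteq> W2" using owbD(3)[OF assms(2) D] by (elim bexE)
  obtain W3 where W3: "W3 \<in> D" "W1 \<subseteq> W3" "W2 \<subseteq> W3" using odD(3)[OF D(1) W1(1) W2(1)] by (elim bexE conjE)
  have "U1 \<union> U2 \<subseteq> W3" using W1(2) W2(2) W3(2,3) by (simp add: subset_trans)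
  with W3(1) show "\<exists>W\<in>D. U1 \<union> U2 \<subseteq> W" by (rule rev_bexI)
qed

lemma owb_empty:
  assumes "openin X V" shows "open_way_below X {} V"
proof (rule owbI[OF openin_empty assms])
  fix D assume "open_directed X D"
  then have "D \<noteq> {}" by (rule odD(1))
  then show "\<exists>W\<in>D. {} \<subseteq> W" by auto
qed

lemma od_finite:
  assumes D: "open_directed X D" and F: "finite F" "F \<subseteq> D"
  shows "\<exists>W\<in>D. \<Union>F \<subseteq> W"
  using F
proof (induction F rule: finite_induct)
  case empty
  obtain W where "W \<in> D" using odD(1)[OF D] by auto
  moreover have "\<Union>{} \<subseteq> W" by simp
  ultimately show ?case by (rule rev_bexI)
next
  case (insert G F)
  then obtain W1 where W1: "W1 \<in> D" "\<Union>F \<subseteq> W1" by auto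
  have GD: "G \<in> D" using insert by auto
  obtain W3 where W3: "W3 \<in> D" "G \<subseteq> W3" "W1 \<subseteq> W3" using odD(3)[OF D GD W1(1)] by (elim bexE conjE)
  have "\<Union>(insert G F) \<subseteq> W3" using W3(2,3) W1(2) by auto
  with W3(1) show ?case by (rule rev_bexI)
qed

lemma owb_compact:
  assumes K: "compactin X K" and U: "openin X U" "U \<subseteq> K" and V: "openin X V" "K \<subseteq> V"
  shows "open_way_below X U V"
proof (rule owbI[OF U(1) V(1)])
  fix D assume D: "open_directed X D" "V \<subseteq> \<Union>D"
  have o: "\<forall>W\<in>D. openin X W" using odD(2)[OF D(1)] by auto
  have cv: "K \<subseteq> \<Union>D" using V(2) D(2) by auto
  obtain F where F: "finite F" "F \<subseteq> D" "K \<subseteq> \<Union>F" using compactin_cover[OF K o cv] by (elim exE conjE)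
  obtain W where W: "W \<in> D" "\<Union>F \<subseteq> W" using od_finite[OF D(1) F(1,2)] by (elim bexE)
  have "U \<subseteq> W" using U(2) F(3) W(2) by auto
  with W(1) show "\<exists>W\<in>D. U \<subseteq> W" by (rule rev_bexI)
qed

lemma ccD:
  assumes "core_compact X" "openin X V"
  shows "open_directed X {U. open_way_below X U V}" "\<Union>{U. open_way_below X U V} = V"
proof -
  have "\<forall>V. openin X V \<longrightarrow> open_directed X {U. open_way_below X U V} \<and> \<Union>{U. open_way_below X U V} = V"
    using assms(1) unfolding core_compact_def by simp
  then show "open_directed X {U. open_way_below X U V}" "\<Union>{U. open_way_below X U V} = V"
    using assms(2) by simp_all
qed

lemma LC_imp_cc:
  assumes lc: "locally_compact_nb X"
  shows "core_compact X"
  unfolding core_compact_def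
proof (intro allI impI conjI)
  fix V assume V: "openin X V"
  show "open_directed X {U. open_way_below X U V}"
  proof (rule odI)
    show "{U. open_way_below X U V} \<noteq> {}" using owb_empty[OF V] by auto
    show "\<And>W. W \<in> {U. open_way_below X U V} \<Longrightarrow> openin X W" using owbD(1) by auto
    fix V1 V2 assume "V1 \<in> {U. open_way_below X U V}" "V2 \<in> {U. open_way_below X U V}"
    then have "open_way_below X (V1 \<union> V2) V" using owb_Un by auto
    then have "V1 \<union> V2 \<in> {U. open_way_below X U V}" by simp
    moreover have "V1 \<subseteq> V1 \<union> V2 \<and> V2 \<subseteq> V1 \<union> V2" by simp
    ultimately show "\<exists>V3\<in>{U. open_way_below X U V}. V1 \<subseteq> V3 \<and> V2 \<subseteq> V3" by (rule rev_bexI)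
  qed
  show "\<Union>{U. open_way_below X U V} = V"
  proof
    show "\<Union>{U. open_way_below X U V} \<subseteq> V" using owb_sub by auto
    show "V \<subseteq> \<Union>{U. open_way_below X U V}"
    proof
      fix y assume y: "y \<in> V"
      have yt: "y \<in> topspace X" using y openin_subset[OF V] by auto
      obtain C where C: "compactin X C" "y \<in> X interior_of C" "C \<subseteq> V"
        using lcD[OF lc yt V y] by (elim exE conjE)
      have "open_way_below X (X interior_of C) V"
        using C(1) openin_interior_of interior_of_subset V C(3) by (rule owb_compact)
      then show "y \<in> \<Union>{U. open_way_below X U V}" using C(2) by auto
    qed
  qed
qed

lemma interp:
  assumes cc: "core_compact X" and A: "open_way_below X A V"
  shows "\<exists>B. open_way_below X A B \<and> open_way_below X B V"
proof -
  have V: "openin X V" using owbD(2)[OF A] .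
  define D where "D = {C. \<exists>B. open_way_below X C B \<and> open_way_below X B V}"
  have Dd: "open_directed X D"
  proof (rule odI)
    have "open_way_below X {} {}" using owb_empty[OF openin_empty] .
    moreover have "open_way_below X {} V" using owb_empty[OF V] .
    ultimately show "D \<noteq> {}" unfolding D_def by blast
    show "\<And>W. W \<in> D \<Longrightarrow> openin X W" unfolding D_def using owbD(1) by blast
    fix C1 C2 assume "C1 \<in> D" "C2 \<in> D"
    then obtain B1 B2 where B: "open_way_below X C1 B1" "open_way_below X B1 V"
      "open_way_below X C2 B2" "open_way_below X B2 V" unfolding D_def by blast
    have oB: "openin X (B1 \<union> B2)" using owbD(2)[OF B(1)] owbD(2)[OF B(3)] by auto
    have "open_way_below X C1 (B1 \<union> B2)" using B(1) owbD(1)[OF B(1)] order_refl oB Un_upper1 by (rule owb_mono)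
    moreover have "open_way_below X C2 (B1 \<union> B2)" using B(3) owbD(1)[OF B(3)] order_refl oB Un_upper2 by (rule owb_mono)
    ultimately have "open_way_below X (C1 \<union> C2) (B1 \<union> B2)" by (rule owb_Un)
    moreover have "open_way_below X (B1 \<union> B2) V" using B(2,4) by (rule owb_Un)
    ultimately have "C1 \<union> C2 \<in> D" unfolding D_def by blast
    moreover have "C1 \<subseteq> C1 \<union> C2 \<and> C2 \<subseteq> C1 \<union> C2" by simp
    ultimately show "\<exists>V3\<in>D. C1 \<subseteq> V3 \<and> C2 \<subseteq> V3" by (rule rev_bexI)
  qed
  have "V \<subseteq> \<Union>D"
  proof
    fix y assume "y \<in> V"
    then obtain B where B: "open_way_below X B V" "y \<in> B" using ccD(2)[OF cc V] by auto
    then obtain C where C: "open_way_below X C B" "y \<in> C" using ccD(2)[OF cc owbD(1)[OF B(1)]] by auto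
    then have "C \<in> D" using B(1) unfolding D_def by blast
    then show "y \<in> \<Union>D" using C(2) by auto
  qed
  then obtain C where C: "C \<in> D" "A \<subseteq> C" using owbD(3)[OF A Dd] by blast
  then obtain B where B: "open_way_below X C B" "open_way_below X B V" unfolding D_def by blast
  have "open_way_below X A B" using B(1) owbD(1)[OF A] C(2) owbD(2)[OF B(1)] order_refl by (rule owb_mono)
  then show ?thesis using B(2) by blast
qed

lemma scottD:
  assumes "K_scott_open X \<U>"
  shows "\<U> \<subseteq> KX X" "\<And>K L. K \<in> \<U> \<Longrightarrow> L \<in> KX X \<Longrightarrow> L \<subseteq> K \<Longrightarrow> L \<in> \<U>"
    "\<And>D. K_directed X D \<Longrightarrow> \<Inter>D \<in> KX X \<Longrightarrow> \<Inter>D \<in> \<U> \<Longrightarrow> D \<inter> \<U> \<noteq> {}"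
  using assms unfolding K_scott_open_def by simp_all

lemma KX_scott: "K_scott_open X (KX X)"
  unfolding K_scott_open_def
proof (intro conjI ballI allI impI)
  show "KX X \<subseteq> KX X" by simp
  fix D assume "K_directed X D \<and> \<Inter>D \<in> KX X \<and> \<Inter>D \<in> KX X"
  then have d: "K_directed X D" by simp
  have "D \<subseteq> KX X" "D \<noteq> {}" using K_dirD(1,2)[OF d] by simp_all
  then show "D \<inter> KX X \<noteq> {}" by auto
qed simp

lemma LC_cont:
  assumes wf: "well_filtered X" and fc: "first_countable (smyth_power X)" and lc: "locally_compact_nb X"
  shows "continuous_map X (Sigma_K X) (upclosure X)"
  unfolding Sigma_K_def
proof (rule continuous_on_generated_topo)
  have kc: "K_continuous_semilattice X" using wf fc lc by (rule LC_imp_Kcont)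
  fix \<U> assume "\<U> \<in> {\<U>. K_scott_open X \<U>}"
  then have so: "K_scott_open X \<U>" by simp
  show "openin X (upclosure X -` \<U> \<inter> topspace X)"
  proof (subst openin_subopen, intro ballI)
    fix x assume x: "x \<in> upclosure X -` \<U> \<inter> topspace X"
    then have xt: "x \<in> topspace X" and xU: "upclosure X x \<in> \<U>" by auto
    have K: "upclosure X x \<in> KX X" using xt by (rule upclosure_KX)
    have cd: "K_directed X {L. K_way_below X L (upclosure X x)}"
      and ci: "\<Inter>{L. K_way_below X L (upclosure X x)} = upclosure X x" using Kcont_D[OF kc K] by simp_all
    have "{L. K_way_below X L (upclosure X x)} \<inter> \<U> \<noteq> {}"
      using scottD(3)[OF so cd] ci K xU by simp
    then obtain L where L: "K_way_below X L (upclosure X x)" "L \<in> \<U>" by auto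
    have LK: "L \<in> KX X" using L(1) by (rule KwbD1)
    have Ls: "saturated X L" using KX_D[OF LK] by simp
    have sub: "upclosure X x \<subseteq> X interior_of L" using Q2[OF fc L(1)] .
    have "X interior_of L \<subseteq> upclosure X -` \<U> \<inter> topspace X"
    proof
      fix y assume y: "y \<in> X interior_of L"
      have yt: "y \<in> topspace X" using y interior_of_subset_topspace[of X L] by auto
      have yL: "y \<in> L" using y interior_of_subset[of X L] by auto
      have "upclosure X y \<subseteq> L" using Ls yL by (rule saturated_upclosure_sub)
      then have "upclosure X y \<in> \<U>" using scottD(2)[OF so L(2) upclosure_KX[OF yt]] by simp
      then show "y \<in> upclosure X -` \<U> \<inter> topspace X" using yt by simp
    qed
    moreover have "x \<in> X interior_of L" using sub x_in_upclosure[OF xt] by auto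
    ultimately show "\<exists>T. openin X T \<and> x \<in> T \<and> T \<subseteq> upclosure X -` \<U> \<inter> topspace X"
      using openin_interior_of[of X L] by (intro exI[of _ "X interior_of L"]) simp
  qed
next
  show "upclosure X ` topspace X \<subseteq> \<Union>{\<U>. K_scott_open X \<U>}"
  proof
    fix K assume "K \<in> upclosure X ` topspace X"
    then obtain x where x: "x \<in> topspace X" "K = upclosure X x" by auto
    have "K \<in> KX X" using upclosure_KX[OF x(1)] x(2) by simp
    moreover have "KX X \<in> {\<U>. K_scott_open X \<U>}" using KX_scott by simp
    ultimately show "K \<in> \<Union>{\<U>. K_scott_open X \<U>}" by (rule UnionI[rotated])
  qed
qed



lemma point_base:
  assumes fc: "first_countable (smyth_power X)" and x: "x \<in> topspace X"
  shows "\<exists>N::nat \<Rightarrow> 'a set. (\<forall>k. openin X (N k) \<and> x \<in> N k \<and> N (Suc k) \<subseteq> N k) \<and>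
            (\<forall>G. openin X G \<and> x \<in> G \<longrightarrow> (\<exists>k. N k \<subseteq> G))"
proof -
  obtain W :: "nat \<Rightarrow> 'a set" where W: "\<forall>n. openin X (W n) \<and> upclosure X x \<subseteq> W n \<and> W (Suc n) \<subseteq> W n"
    and Wb: "\<forall>U. openin X U \<and> upclosure X x \<subseteq> U \<longrightarrow> (\<exists>n. W n \<subseteq> U)"
    using nbhd_base[OF fc upclosure_KX[OF x]] by (elim exE conjE)
  have xu: "x \<in> upclosure X x" using x by (rule x_in_upclosure)
  have 1: "\<forall>k. openin X (W k) \<and> x \<in> W k \<and> W (Suc k) \<subseteq> W k" using W xu by blast
  have 2: "\<forall>G. openin X G \<and> x \<in> G \<longrightarrow> (\<exists>k. W k \<subseteq> G)"
  proof (intro allI impI)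
    fix G assume G: "openin X G \<and> x \<in> G"
    then have "upclosure X x \<subseteq> G" using upclosure_sub by metis
    then show "\<exists>k. W k \<subseteq> G" using Wb G by simp
  qed
  show ?thesis using 1 2 by (intro exI[of _ W]) simp
qed

lemma HM_chain:
  fixes U :: "nat \<Rightarrow> 'a set"
  assumes wf: "well_filtered X" and fc: "first_countable (smyth_power X)"
    and Uo: "\<And>n. openin X (U n)" and Uw: "\<And>n. open_way_below X (U (Suc n)) (U n)"
    and Ob: "openin X Ob" and QO: "\<Inter>(range U) \<subseteq> Ob"
  shows "\<exists>n. U n \<subseteq> Ob"
proof (rule ccontr)
  assume "\<not> (\<exists>n. U n \<subseteq> Ob)"
  then have nO: "\<not> U n \<subseteq> Ob" for n by simp
  have Ud: "U (Suc n) \<subseteq> U n" for n using Uw[of n] by (rule owb_sub)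
  have Ule: "U m \<subseteq> U n" if "n \<le> m" for n m using lift_Suc_antimono_le[of U, OF Ud that] by simp
  have "\<forall>x\<in>topspace X. \<exists>N::nat \<Rightarrow> 'a set. (\<forall>k. openin X (N k) \<and> x \<in> N k \<and> N (Suc k) \<subseteq> N k) \<and>
            (\<forall>G. openin X G \<and> x \<in> G \<longrightarrow> (\<exists>k. N k \<subseteq> G))"
    using point_base[OF fc] by blast
  from bchoice[OF this] obtain NN :: "'a \<Rightarrow> nat \<Rightarrow> 'a set" where NN: "\<forall>x\<in>topspace X. (\<forall>k. openin X (NN x k) \<and> x \<in> NN x k \<and> NN x (Suc k) \<subseteq> NN x k) \<and>
            (\<forall>G. openin X G \<and> x \<in> G \<longrightarrow> (\<exists>k. NN x k \<subseteq> G))"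
    by (elim exE)
  have NNo: "openin X (NN x k)" and NNx: "x \<in> NN x k" and NNd: "NN x (Suc k) \<subseteq> NN x k"
    if "x \<in> topspace X" for x k using NN that by simp_all
  have NNb: "\<exists>k. NN x k \<subseteq> G" if "x \<in> topspace X" "openin X G" "x \<in> G" for x G
    using NN that by simp
  have NNle: "NN x m \<subseteq> NN x k" if "x \<in> topspace X" "k \<le> m" for x k m
    using lift_Suc_antimono_le[of "NN x", OF NNd[OF that(1)] that(2)] by simp
  define \<G> where "\<G> = {G. openin X G \<and> (\<forall>n. \<not> U n \<subseteq> G \<union> Ob)}"
  have chain: "\<Union>C \<in> \<G>" if C: "C \<in> chains \<G>" for C
  proof -
    have CG: "C \<subseteq> \<G>" and ch: "\<forall>A\<in>C. \<forall>B\<in>C. A \<subseteq> B \<or> B \<subseteq> A"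
      using C unfolding chains_def chain_subset_def by simp_all
    have Co: "openin X c" if "c \<in> C" for c using CG that by (auto simp: \<G>_def)
    have "openin X (\<Union>C)" using Co by (intro openin_Union) auto
    moreover have "\<not> U n \<subseteq> \<Union>C \<union> Ob" for n
    proof
      assume Un: "U n \<subseteq> \<Union>C \<union> Ob"
      show False
      proof (cases "C = {}")
        case True then show False using Un nO[of n] by simp
      next
        case False
        define D where "D = (\<lambda>c. c \<union> Ob) ` C"
        have Dd: "open_directed X D"
        proof (rule odI)
          show "D \<noteq> {}" using False by (simp add: D_def)
          show "\<And>V. V \<in> D \<Longrightarrow> openin X V" using Co Ob by (auto simp: D_def)
          fix V1 V2 assume "V1 \<in> D" "V2 \<in> D"
          then obtain c1 c2 where c: "c1 \<in> C" "c2 \<in> C" "V1 = c1 \<union> Ob" "V2 = c2 \<union> Ob" by (auto simp: D_def)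
          show "\<exists>V3\<in>D. V1 \<subseteq> V3 \<and> V2 \<subseteq> V3"
          proof (cases "c1 \<subseteq> c2")
            case True
            have "V2 \<in> D" using c by (simp add: D_def)
            moreover have "V1 \<subseteq> V2 \<and> V2 \<subseteq> V2" using True c by auto
            ultimately show ?thesis by (rule rev_bexI)
          next
            case False
            then have "c2 \<subseteq> c1" using ch c(1,2) by blast
            have "V1 \<in> D" using c by (simp add: D_def)
            moreover have "V1 \<subseteq> V1 \<and> V2 \<subseteq> V1" using \<open>c2 \<subseteq> c1\<close> c by auto
            ultimately show ?thesis by (rule rev_bexI)
          qed
        qed
        have "\<Union>D = \<Union>C \<union> Ob" using False by (auto simp: D_def)
        then have UD: "U n \<subseteq> \<Union>D" using Un by simp
        obtain V where V: "V \<in> D" "U (Suc n) \<subseteq> V" using owbD(3)[OF Uw[of n] Dd UD] by (elim bexE)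
        then obtain c where c: "c \<in> C" "V = c \<union> Ob" by (auto simp: D_def)
        have "c \<in> \<G>" using c(1) CG by auto
        then have "\<not> U (Suc n) \<subseteq> c \<union> Ob" by (simp add: \<G>_def)
        then show False using V(2) c(2) by simp
      qed
    qed
    ultimately show ?thesis by (simp add: \<G>_def)
  qed
  obtain M where MG: "M \<in> \<G>" and Mmax: "\<And>G. G \<in> \<G> \<Longrightarrow> M \<subseteq> G \<Longrightarrow> G = M"
    using Zorn_Lemma[of \<G>] chain by blast
  have Mo: "openin X M" and MU: "\<And>n. \<not> U n \<subseteq> M \<union> Ob" using MG by (simp_all add: \<G>_def)
  have "M \<union> Ob \<in> \<G>" using openin_Un[OF Mo Ob] MU by (simp add: \<G>_def Un_assoc)
  then have "M \<union> Ob = M" using Mmax by simp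
  then have OM: "Ob \<subseteq> M" by auto
  have MU': "\<not> U n \<subseteq> M" for n using MU[of n] OM by (simp add: sup_absorb1)
  define A where "A = topspace X - M"
  have At: "A \<subseteq> topspace X" by (simp add: A_def)
  have meetU: "U n \<inter> A \<noteq> {}" for n
    using MU'[of n] openin_subset[OF Uo[of n]] by (auto simp: A_def)
  have maxi: "\<exists>a. U a \<subseteq> M \<union> G" if G: "openin X G" "G \<inter> A \<noteq> {}" for G
  proof (rule ccontr)
    assume "\<not> ?thesis"
    moreover have "(M \<union> G) \<union> Ob = M \<union> G" using OM by auto
    ultimately have "\<forall>n. \<not> U n \<subseteq> (M \<union> G) \<union> Ob" by simp
    then have "M \<union> G \<in> \<G>" using openin_Un[OF Mo G(1)] by (simp add: \<G>_def)
    then have "M \<union> G = M" using Mmax by simp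
    then have "G \<subseteq> M" by auto
    then show False using G(2) by (auto simp: A_def)
  qed
  have irr: "G1 \<inter> G2 \<inter> A \<noteq> {}" if G: "openin X G1" "G1 \<inter> A \<noteq> {}" "openin X G2" "G2 \<inter> A \<noteq> {}" for G1 G2
  proof
    assume e: "G1 \<inter> G2 \<inter> A = {}"
    obtain a where a: "U a \<subseteq> M \<union> G1" using maxi[OF G(1,2)] by (elim exE)
    obtain b where b: "U b \<subseteq> M \<union> G2" using maxi[OF G(3,4)] by (elim exE)
    have "U (max a b) \<subseteq> U a" "U (max a b) \<subseteq> U b" using Ule by simp_all
    then have "U (max a b) \<subseteq> (M \<union> G1) \<inter> (M \<union> G2)" using a b by auto
    moreover have "G1 \<inter> G2 \<subseteq> M" using e openin_subset[OF G(1)] by (auto simp: A_def)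
    ultimately have "U (max a b) \<subseteq> M" by auto
    then show False using MU' by simp
  qed
  have fin: "finite F \<Longrightarrow> (\<forall>G\<in>F. openin X G \<and> G \<inter> A \<noteq> {}) \<Longrightarrow>
      openin X (U n \<inter> \<Inter>F) \<and> U n \<inter> \<Inter>F \<inter> A \<noteq> {}" for F n
  proof (induction F rule: finite_induct)
    case empty
    then show ?case using Uo[of n] meetU[of n] by simp
  next
    case (insert G F)
    then have IH: "openin X (U n \<inter> \<Inter>F)" "U n \<inter> \<Inter>F \<inter> A \<noteq> {}" by simp_all
    have G: "openin X G" "G \<inter> A \<noteq> {}" using insert.prems by simp_all
    have e: "U n \<inter> \<Inter>(insert G F) = G \<inter> (U n \<inter> \<Inter>F)" by auto
    have "openin X (G \<inter> (U n \<inter> \<Inter>F))" using G(1) IH(1) by (rule openin_Int)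
    moreover have "G \<inter> (U n \<inter> \<Inter>F) \<inter> A \<noteq> {}" using irr[OF G IH] .
    ultimately show ?case using e by simp
  qed
  define P where "P n f = (SOME p. p \<in> U n \<inter> \<Inter>((\<lambda>j. NN (f j) n) ` {..<n}) \<inter> A)" for n and f :: "nat \<Rightarrow> 'a"
  define h where "h = rec_nat (\<lambda>_. undefined) (\<lambda>n f. f(n := P n f))"
  have h0: "h 0 = (\<lambda>_. undefined)" and hS: "h (Suc n) = (h n)(n := P n (h n))" for n
    by (simp_all add: h_def)
  define x where "x n = h (Suc n) n" for n
  have hx: "h k j = x j" if "j < k" for j k
    using that
  proof (induction k)
    case 0 then show ?case by simp
  next
    case (Suc k)
    show ?case
    proof (cases "j = k")
      case True then show ?thesis by (simp add: x_def)
    next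
      case False
      then have "j < k" using Suc.prems by simp
      then show ?thesis using Suc.IH False by (simp add: hS)
    qed
  qed
  have xdef: "x n = P n x" for n
  proof -
    have "x n = P n (h n)" by (simp add: x_def hS)
    also have "P n (h n) = P n x"
    proof -
      have "(\<lambda>j. NN (h n j) n) ` {..<n} = (\<lambda>j. NN (x j) n) ` {..<n}"
        using hx by (intro image_cong) auto
      then show ?thesis by (simp add: P_def)
    qed
    finally show ?thesis .
  qed
  have xprop: "x n \<in> U n \<inter> \<Inter>((\<lambda>j. NN (x j) n) ` {..<n}) \<inter> A" for n
  proof (induction n rule: less_induct)
    case (less n)
    have xjA: "x j \<in> A" if "j < n" for j using less[OF that] by simp
    have xjt: "x j \<in> topspace X" if "j < n" for j using xjA[OF that] At by auto
    define F where "F = (\<lambda>j. NN (x j) n) ` {..<n}"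
    have "finite F" by (simp add: F_def)
    moreover have "\<forall>G\<in>F. openin X G \<and> G \<inter> A \<noteq> {}"
    proof
      fix G assume "G \<in> F"
      then obtain j where j: "j < n" "G = NN (x j) n" by (auto simp: F_def)
      have "openin X G" using NNo[OF xjt[OF j(1)]] j(2) by simp
      moreover have "x j \<in> G \<inter> A" using NNx[OF xjt[OF j(1)]] xjA[OF j(1)] j(2) by simp
      ultimately show "openin X G \<and> G \<inter> A \<noteq> {}" by auto
    qed
    ultimately have "U n \<inter> \<Inter>F \<inter> A \<noteq> {}" using fin by simp
    then have "\<exists>p. p \<in> U n \<inter> \<Inter>F \<inter> A" by auto
    then have "P n x \<in> U n \<inter> \<Inter>F \<inter> A" unfolding P_def F_def by (rule someI_ex)
    then show ?case using xdef[of n] by (simp add: F_def)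
  qed
  have xA: "x n \<in> A" and xU: "x n \<in> U n" for n using xprop[of n] by simp_all
  have xt: "x n \<in> topspace X" for n using xA[of n] At by auto
  have xN: "x m \<in> NN (x j) m" if "j < m" for j m using xprop[of m] that by auto
  have ev: "\<exists>k. \<forall>m\<ge>k. x m \<in> G" if G: "openin X G" "{} \<subseteq> G" "x n \<in> G" for G n
  proof -
    obtain k0 where k0: "NN (x n) k0 \<subseteq> G" using NNb[OF xt[of n] G(1) G(3)] by (elim exE)
    have "x m \<in> G" if "m \<ge> max k0 (Suc n)" for m
    proof -
      have "x m \<in> NN (x n) m" using xN[of n m] that by simp
      also have "NN (x n) m \<subseteq> NN (x n) k0" using NNle[OF xt[of n], of k0 m] that by simp
      finally show ?thesis using k0 by auto
    qed
    then show ?thesis by blast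
  qed
  define K where "K n = {} \<union> {y \<in> topspace X. \<exists>m\<ge>n. spec_le X (x m) y}" for n
  have KKX: "K n \<in> KX X" for n
  proof (rule KX_I)
    have "x n \<in> K n" unfolding K_def using tail_mem[of x n X n "{}"] xt[of n] by simp
    then show "K n \<noteq> {}" by auto
    show "compactin X (K n)" unfolding K_def
      by (rule tail_compact) (simp, rule xt, rule ev)
    show "saturated X (K n)" unfolding K_def by (rule tail_saturated) (simp add: saturated_def)
  qed
  have Kd: "K (Suc n) \<subseteq> K n" for n
  proof
    fix y assume "y \<in> K (Suc n)"
    then obtain m where "m \<ge> Suc n" "spec_le X (x m) y" "y \<in> topspace X" by (auto simp: K_def)
    then show "y \<in> K n" unfolding K_def by (intro UnI2 CollectI conjI exI[of _ m]) simp_all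
  qed
  have Kdir: "K_directed X (range K)" using KKX Kd by (rule K_directed_range)
  have KU: "K n \<subseteq> U n" for n
  proof
    fix y assume "y \<in> K n"
    then obtain m where m: "m \<ge> n" "spec_le X (x m) y" by (auto simp: K_def)
    have "x m \<in> U n" using xU[of m] Ule[OF m(1)] by auto
    then show "y \<in> U n" using open_upper[OF Uo[of n] _ m(2)] by simp
  qed
  have "\<Inter>(range K) \<subseteq> \<Inter>(range U)" using KU by auto
  then have KM: "\<Inter>(range K) \<subseteq> M" using QO OM by auto
  obtain Kn where "Kn \<in> range K" "Kn \<subseteq> M" using wfD[OF wf Mo Kdir KM] by (elim bexE)
  then obtain n where "K n \<subseteq> M" by auto
  moreover have "x n \<in> K n" unfolding K_def using tail_mem[of x n X n "{}"] xt[of n] by simp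
  ultimately show False using xA[of n] by (auto simp: A_def)
qed



lemma cc_imp_LC:
  assumes wf: "well_filtered X" and fc: "first_countable (smyth_power X)" and cc: "core_compact X"
  shows "locally_compact_nb X"
  unfolding locally_compact_nb_def
proof (intro ballI allI impI)
  fix x V assume x: "x \<in> topspace X" and V: "openin X V \<and> x \<in> V"
  have "x \<in> \<Union>{U. open_way_below X U V}" using ccD(2)[OF cc] V by simp
  then obtain A0 where A0: "open_way_below X A0 V" "x \<in> A0" by auto
  define U where "U = rec_nat V (\<lambda>n u. SOME B. open_way_below X A0 B \<and> open_way_below X B u)"
  have U0: "U 0 = V" and US: "U (Suc n) = (SOME B. open_way_below X A0 B \<and> open_way_below X B (U n))" for n
    by (simp_all add: U_def)
  have step: "open_way_below X A0 (U (Suc n)) \<and> open_way_below X (U (Suc n)) (U n)"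
    if "open_way_below X A0 (U n)" for n
  proof -
    have "\<exists>B. open_way_below X A0 B \<and> open_way_below X B (U n)" using interp[OF cc that] .
    then have "open_way_below X A0 (SOME B. open_way_below X A0 B \<and> open_way_below X B (U n)) \<and>
        open_way_below X (SOME B. open_way_below X A0 B \<and> open_way_below X B (U n)) (U n)"
      by (rule someI_ex)
    then show ?thesis by (simp add: US)
  qed
  have A0U: "open_way_below X A0 (U n)" for n
  proof (induction n)
    case 0 then show ?case using A0(1) by (simp add: U0)
  next
    case (Suc n) then show ?case using step by simp
  qed
  have Uw: "open_way_below X (U (Suc n)) (U n)" for n using step[OF A0U[of n]] by simp
  have Uo: "openin X (U n)" for n using owbD(2)[OF A0U[of n]] .
  define Q where "Q = \<Inter>(range U)"
  have hm: "\<exists>n. U n \<subseteq> G" if "openin X G" "Q \<subseteq> G" for G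
    using HM_chain[of X U G, OF wf fc Uo Uw that(1)] that(2) by (simp add: Q_def)
  have QU: "Q \<subseteq> U n" for n by (auto simp: Q_def)
  have Qc: "compactin X Q"
  proof (rule compactinI)
    show "Q \<subseteq> topspace X" using QU[of 0] openin_subset[OF Uo[of 0]] by auto
  next
    fix \<C> assume Co: "\<And>C. C \<in> \<C> \<Longrightarrow> openin X C" and cov: "Q \<subseteq> \<Union>\<C>"
    have "openin X (\<Union>\<C>)" using Co by (intro openin_Union) auto
    then obtain n where n: "U n \<subseteq> \<Union>\<C>" using hm cov by blast
    define D where "D = {\<Union>F | F. finite F \<and> F \<subseteq> \<C>}"
    have Dd: "open_directed X D"
    proof (rule odI)
      have "\<Union>{} \<in> D" unfolding D_def by blast
      then show "D \<noteq> {}" by auto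
      show "\<And>V. V \<in> D \<Longrightarrow> openin X V"
      proof -
        fix V assume "V \<in> D"
        then obtain F where F: "V = \<Union>F" "F \<subseteq> \<C>" by (auto simp: D_def)
        have "openin X (\<Union>F)" using Co F(2) by (intro openin_Union) auto
        then show "openin X V" using F(1) by simp
      qed
      fix V1 V2 assume "V1 \<in> D" "V2 \<in> D"
      then obtain F1 F2 where F: "V1 = \<Union>F1" "finite F1" "F1 \<subseteq> \<C>" "V2 = \<Union>F2" "finite F2" "F2 \<subseteq> \<C>"
        by (auto simp: D_def)
      have "\<Union>(F1 \<union> F2) \<in> D" using F unfolding D_def by blast
      moreover have "V1 \<subseteq> \<Union>(F1 \<union> F2) \<and> V2 \<subseteq> \<Union>(F1 \<union> F2)" using F by auto
      ultimately show "\<exists>V3\<in>D. V1 \<subseteq> V3 \<and> V2 \<subseteq> V3" by (rule rev_bexI)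
    qed
    have UD: "U n \<subseteq> \<Union>D"
    proof
      fix y assume "y \<in> U n"
      then obtain C where C: "C \<in> \<C>" "y \<in> C" using n by auto
      have "\<Union>{C} \<in> D" using C(1) unfolding D_def by blast
      then show "y \<in> \<Union>D" using C(2) by auto
    qed
    obtain W where W: "W \<in> D" "U (Suc n) \<subseteq> W" using owbD(3)[OF Uw[of n] Dd UD] by (elim bexE)
    then obtain F where F: "W = \<Union>F" "finite F" "F \<subseteq> \<C>" by (auto simp: D_def)
    have "Q \<subseteq> \<Union>F" using QU[of "Suc n"] W(2) F(1) by auto
    then show "\<exists>\<F>. finite \<F> \<and> \<F> \<subseteq> \<C> \<and> Q \<subseteq> \<Union>\<F>" using F(2,3) by auto
  qed
  have "A0 \<subseteq> Q" using owb_sub[OF A0U] by (auto simp: Q_def)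
  then have "A0 \<subseteq> X interior_of Q" using owbD(1)[OF A0(1)] by (intro interior_of_maximal)
  then have "x \<in> X interior_of Q" using A0(2) by auto
  moreover have "Q \<subseteq> V" using QU[of 0] U0 by simp
  ultimately show "\<exists>K. compactin X K \<and> x \<in> X interior_of K \<and> K \<subseteq> V" using Qc by auto
qed

theorem mainTheorem10:
  fixes X :: "'a topology"
  assumes "t0_space X"
    and "well_filtered X"
    and "first_countable (smyth_power X)"
  shows "(locally_compact_nb X \<longleftrightarrow>
            K_continuous_semilattice X \<and> continuous_map X (Sigma_K X) (upclosure X))
       \<and> (locally_compact_nb X \<longleftrightarrow> K_continuous_semilattice X \<and> property_Q X)
       \<and> (locally_compact_nb X \<longleftrightarrow> K_continuous_semilattice X)
       \<and> (locally_compact_nb X \<longleftrightarrow> core_compact X)"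
proof -
  have pq: "property_Q X" using assms(2,3) by (rule propQ)
  have e1: "locally_compact_nb X \<longleftrightarrow> K_continuous_semilattice X"
    using LC_imp_Kcont[OF assms(2,3)] Kcont_imp_LC[OF assms(2,3)] by blast
  have e2: "locally_compact_nb X \<longleftrightarrow> core_compact X"
    using LC_imp_cc cc_imp_LC[OF assms(2,3)] by blast
  have c: "locally_compact_nb X \<Longrightarrow> continuous_map X (Sigma_K X) (upclosure X)"
    using LC_cont[OF assms(2,3)] by blast
  show ?thesis using pq e1 e2 c by blast
qed


end
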